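(* Denote $\left\|G_m\right\|_{\mathcal{H}_2}^2$ as $f(s_1,s_2)$. Then \begin{equation*} f(s_1,s_2)=2(s_1+s_2)\, C \mathcal{A}_2^{-1}\left(s_1s_2 \mathbf{B}+ A \mathbf{B} A^T\right) \mathcal{A}_2^{-T} C^T, \end{equation*} where $\mathcal{A}_2=\left(s_1 I-A\right)\left(s_2 I-A\right)$ and $\mathbf{B}=B B^T$.
   Context: Let $G(s)=C(sI-A)^{-1}B$ be a stable SISO continuous-time LTI system of order $n$, with $A\in\mathbb{R}^{n\times n}$, $B\in\mathbb{R}^{n\times 1}$, $C\in\mathbb{R}^{1\times n}$. Consider a stable reduced-order model $G_m(s)=C_m(sI_m-A_m)^{-1}B_m$ of order $m=2$ written in the diagonal form $A_m=\operatorname{diag}(a_1,a_2)$, $B_m=[b_1\ b_2]^T$, $C_m=[1\ 1]$, which satisfies the first-order necessary conditions for $\mathcal{H}_2$ optimality, i.e. with interpolation points $s_i=-a_i$ ($i=1,2$) it interpolates $G$ and $G'$ at $s_1,s_2$: $G_m(s_i)=G(s_i)$, $G_m'(s_i)=G'(s_i)$. The interpolation points are distinct ($s_1\neq s_2$), not eigenvalues of $A$, and either both real ($s_1,s_2\in\mathbb{R}$) or a complex conjugate pair ($s_2=\bar s_1$). Define $g_i=C(s_iI-A)^{-1}B$, $i=1,2$, so that $G_m(s_i)=g_i$. The $\mathcal{H}_2$ norm is $\|G_m\|_{\mathcal{H}_2}^2=C_mP_mC_m^H$, where $P_m$ is the controllability Gramian solving $A_mP_m+P_mA_m^H+B_mB_m^H=0$.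 *)

theory Defs
  imports "HOL-Analysis.Analysis"
begin

definition cmat :: "real^'n^'m \<Rightarrow> complex^'n^'m" where
  "cmat A = (\<chi> i j. complex_of_real (A$i$j))"

definition cvec :: "real^'n \<Rightarrow> complex^'n" where
  "cvec v = (\<chi> i. complex_of_real (v$i))"

definition hadj :: "complex^'n^'m \<Rightarrow> complex^'m^'n" where
  "hadj M = (\<chi> i j. cnj (M$j$i))"

definition is_eigenvalue :: "complex^'n^'n \<Rightarrow> complex \<Rightarrow> bool" where
  "is_eigenvalue A l \<longleftrightarrow> (\<exists>v. v \<noteq> 0 \<and> A *v v = l *s v)"

definition hurwitz :: "complex^'n^'n \<Rightarrow> bool" where
  "hurwitz A \<longleftrightarrow> (\<forall>l. is_eigenvalue A l \<longrightarrow> Re l < 0)"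

text \<open>SISO transfer function C (sI - A)^{-1} B, with B a column and C a row vector.\<close>
definition tf :: "complex^'n^'n \<Rightarrow> complex^'n \<Rightarrow> complex^'n \<Rightarrow> complex \<Rightarrow> complex" where
  "tf A B C s = (\<Sum>i\<in>UNIV. C$i * ((matrix_inv (mat s - A) *v B)$i))"

end

theory Submission
  imports Defs
begin



definition cdot :: "complex^'n \<Rightarrow> complex^'n \<Rightarrow> complex" where
  "cdot u w = (\<Sum>i\<in>UNIV. u$i * w$i)"

definition cnjv :: "complex^'n \<Rightarrow> complex^'n" where
  "cnjv x = (\<chi> i. cnj (x$i))"

lemma inv_props:
  fixes M :: "'a::field^'n^'n"
  assumes "invertible M"
  shows "M ** matrix_inv M = mat 1" "matrix_inv M ** M = mat 1"
proof -
  have "\<exists>A'. M ** A' = mat 1 \<and> A' ** M = mat 1" using assms invertible_def by blast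
  then have "M ** matrix_inv M = mat 1 \<and> matrix_inv M ** M = mat 1"
    unfolding matrix_inv_def by (rule someI_ex)
  then show "M ** matrix_inv M = mat 1" "matrix_inv M ** M = mat 1" by auto
qed

lemma inv_apply:
  fixes M :: "'a::field^'n^'n"
  assumes "invertible M" "M *v x = b"
  shows "matrix_inv M *v b = x"
  by (metis assms inv_props(2) matrix_vector_mul_assoc matrix_vector_mul_lid)

lemma mat_mulv: "mat k *v x = k *s (x :: 'a::comm_ring_1^'n)"
proof -
  have "(\<Sum>j\<in>UNIV. (if i = j then k else 0) * x$j) = k * x$i" for i
  proof -
    have "(\<Sum>j\<in>UNIV. (if i = j then k else 0) * x$j) = (\<Sum>j\<in>UNIV. if i = j then k * x$j else 0)"
      by (rule sum.cong) auto
    then show ?thesis by simp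
  qed
  then show ?thesis by (simp add: vec_eq_iff matrix_vector_mult_def mat_def)
qed

lemma ker_invertible:
  fixes M :: "'a::field^'n^'n"
  assumes "\<And>x. M *v x = 0 \<Longrightarrow> x = 0"
  shows "invertible M"
  using assms invertible_left_inverse matrix_left_invertible_ker by blast

lemma noteig_inv:
  assumes "\<not> is_eigenvalue M s"
  shows "invertible (mat s - M)"
proof (rule ker_invertible)
  fix x assume "(mat s - M) *v x = 0"
  then have "M *v x = s *s x" by (simp add: matrix_vector_mult_diff_rdistrib mat_mulv)
  then show "x = 0" using assms unfolding is_eigenvalue_def by auto
qed

lemma cdot_mat: "cdot u (X *v w) = cdot (u v* X) w"
proof -
  have "(\<Sum>i\<in>UNIV. u$i * (\<Sum>j\<in>UNIV. X$i$j * w$j)) = (\<Sum>i\<in>UNIV. \<Sum>j\<in>UNIV. u$i * X$i$j * w$j)"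
    by (simp add: sum_distrib_left mult.assoc)
  also have "\<dots> = (\<Sum>j\<in>UNIV. \<Sum>i\<in>UNIV. u$i * X$i$j * w$j)" by (rule sum.swap)
  also have "\<dots> = (\<Sum>j\<in>UNIV. (\<Sum>i\<in>UNIV. u$i * X$i$j) * w$j)" by (simp add: sum_distrib_right)
  finally show ?thesis unfolding cdot_def matrix_vector_mult_def vector_matrix_mult_def by simp
qed

lemma cdot_comm: "cdot u w = cdot w u"
  unfolding cdot_def by (simp add: mult.commute)

lemma cdot_lin: "cdot u (v + w) = cdot u v + cdot u w" "cdot u (v - w) = cdot u v - cdot u w"
  "cdot u (k *s v) = k * cdot u v"
    apply (simp add: cdot_def sum.distrib distrib_left)
   apply (simp add: cdot_def sum_subtractf right_diff_distrib)
  apply (simp add: cdot_def sum_distrib_left mult.left_commute)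
  done

lemma cdot_scal_l: "cdot (k *s v) u = k * cdot v u"
  unfolding cdot_def by (simp add: sum_distrib_left mult.assoc)

lemma tf_cdot: "tf A B C s = cdot C (matrix_inv (mat s - A) *v B)"
  unfolding tf_def cdot_def ..

lemma cnjv_sys: "(mat (cnj s) - cmat A) *v cnjv x = cnjv ((mat s - cmat A) *v x)"
  unfolding cnjv_def
  by (auto simp: vec_eq_iff matrix_vector_mult_def cmat_def mat_def intro!: sum.cong)

lemma cnjv_cvec: "cnjv (cvec B) = cvec B"
  unfolding cnjv_def cvec_def by (simp add: vec_eq_iff)

lemma cnj_cdot: "cnj (cdot (cvec C) x) = cdot (cvec C) (cnjv x)"
  unfolding cnjv_def cvec_def cdot_def by simp

lemma K_mul: "y v* cmat (\<chi> i j. B$i * B$j) = cdot y (cvec B) *s cvec B"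
proof -
  have "(\<Sum>k\<in>UNIV. y $ k * (complex_of_real (B $ k) * complex_of_real (B $ i))) =
        complex_of_real (B $ i) * (\<Sum>k\<in>UNIV. y $ k * complex_of_real (B $ k))" for i
    unfolding sum_distrib_left by (rule sum.cong) (simp_all add: mult_ac)
  then show ?thesis unfolding cdot_def cmat_def cvec_def vector_matrix_mult_def
    by (simp add: vec_eq_iff)
qed


lemma swap_diff: "a - b = (c::'a::ab_group_add) \<Longrightarrow> b = a - c"
  by (drule sym) simp

lemma scal_cancel: "d \<noteq> 0 \<Longrightarrow> (1/d) *s ((d *s x + b) - b) = (x::'a::field^'n)"
  by (simp add: vector_smult_assoc)

lemma scal_cancel2: "d \<noteq> 0 \<Longrightarrow> (1/d) *s (d *s x) = (x::'a::field^'n)"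
  by (simp add: vector_smult_assoc)

lemma final_alg:
  fixes s1 s2 b1 b2 g1 g2 :: complex
  assumes h: "s1 \<noteq> 0" "s2 \<noteq> 0" "s1 + s2 \<noteq> 0" "s2 - s1 \<noteq> 0" "g1 = b1/(2 * s1) + b2/(s1+s2)" "g2 = b1/(s1+s2) + b2/(2 * s2)"
  shows "b1*g1 + b2*g2 = 2*(s1+s2)*(s1* s2*((g1-g2)/(s2-s1))^2 + ((s1*g1-s2*g2)/(s2-s1))^2)"
proof -
  have e1: "2 * s1 * (s1+s2) * g1 = b1 * (s1+s2) + 2 * s1 * b2"
  proof -
    have "2 * s1 * (s1+s2) * g1 = (s1+s2) * (2 * s1 * (b1/(2 * s1))) + 2 * s1 * ((s1+s2) * (b2/(s1+s2)))"
      unfolding h(5) by (simp add: distrib_left mult_ac add_divide_distrib)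
    then show ?thesis using h(1,3) by simp
  qed
  have e2: "2 * s2 * (s1+s2) * g2 = b1 * 2 * s2 + b2 * (s1+s2)"
  proof -
    have "2 * s2 * (s1+s2) * g2 = 2 * s2 * ((s1+s2) * (b1/(s1+s2))) + (s1+s2) * (2 * s2 * (b2/(2 * s2)))"
      unfolding h(6) by (simp add: distrib_left mult_ac add_divide_distrib)
    then show ?thesis using h(2,3) by simp
  qed
  have "b1*g1 + b2*g2 = 2*(s1+s2)*((s1* s2*(g1-g2)^2 + (s1*g1-s2*g2)^2)/(s2-s1)^2)"
    using h(1-4) e1 e2
    apply (simp add: divide_simps)
    apply algebra done
  then show ?thesis by (simp add: power_divide add_divide_distrib)
qed

theorem lemma5:
  fixes A :: "real^'n^'n" and B C :: "real^'n"
    and s1 s2 b1 b2 :: complex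
    and Am :: "complex^2^2" and Bm Cm :: "complex^2"
    and P :: "complex^2^2"
  defines "Am \<equiv> (\<chi> i j. if i = j then (vector [- s1, - s2] :: complex^2)$i else 0)"
    and "Bm \<equiv> vector [b1, b2]"
    and "Cm \<equiv> vector [1, 1]"
  assumes stableG: "hurwitz (cmat A)"
    and stableGm: "hurwitz Am"
    and distinct: "s1 \<noteq> s2"
    and not_eig: "\<not> is_eigenvalue (cmat A) s1" "\<not> is_eigenvalue (cmat A) s2"
    and real_or_conj: "(Im s1 = 0 \<and> Im s2 = 0) \<or> s2 = cnj s1"
    and interp1: "tf Am Bm Cm s1 = tf (cmat A) (cvec B) (cvec C) s1"
    and interp2: "tf Am Bm Cm s2 = tf (cmat A) (cvec B) (cvec C) s2"
    and dinterp1: "deriv (tf Am Bm Cm) s1 = deriv (tf (cmat A) (cvec B) (cvec C)) s1"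
    and dinterp2: "deriv (tf Am Bm Cm) s2 = deriv (tf (cmat A) (cvec B) (cvec C)) s2"
    and lyap: "Am ** P + P ** hadj Am + (\<chi> i j. Bm$i * cnj (Bm$j)) = 0"
  shows "(\<Sum>i\<in>UNIV. \<Sum>j\<in>UNIV. Cm$i * P$i$j * cnj (Cm$j)) =
    2 * (s1 + s2) *
    (\<Sum>i\<in>UNIV. (cvec C v*
        (matrix_inv ((mat s1 - cmat A) ** (mat s2 - cmat A))
         ** (mat (s1 * s2) ** cmat (\<chi> i j. B$i * B$j)
             + cmat A ** cmat (\<chi> i j. B$i * B$j) ** transpose (cmat A))
         ** transpose (matrix_inv ((mat s1 - cmat A) ** (mat s2 - cmat A))))) $ i
      * cvec C $ i)"
proof -
  define cA where "cA = cmat A"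
  define cB where "cB = cvec B"
  define cC where "cC = cvec C"
  define M1 where "M1 = mat s1 - cA"
  define M2 where "M2 = mat s2 - cA"
  define x1 where "x1 = matrix_inv M1 *v cB"
  define x2 where "x2 = matrix_inv M2 *v cB"
  define g1 where "g1 = cdot cC x1"
  define g2 where "g2 = cdot cC x2"
  have inv1: "invertible M1" unfolding M1_def cA_def by (rule noteig_inv[OF not_eig(1)])
  have inv2: "invertible M2" unfolding M2_def cA_def by (rule noteig_inv[OF not_eig(2)])
  have hx1: "M1 *v x1 = cB" unfolding x1_def by (simp add: matrix_vector_mul_assoc inv_props(1)[OF inv1])
  have hx2: "M2 *v x2 = cB" unfolding x2_def by (simp add: matrix_vector_mul_assoc inv_props(1)[OF inv2])
  have g1_eq: "tf (cmat A) (cvec B) (cvec C) s1 = g1"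
    unfolding g1_def x1_def M1_def tf_cdot cA_def cB_def cC_def ..
  have g2_eq: "tf (cmat A) (cvec B) (cvec C) s2 = g2"
    unfolding g2_def x2_def M2_def tf_cdot cA_def cB_def cC_def ..
  have Am11: "Am$1$1 = - s1" and Am22: "Am$2$2 = - s2" and Am12: "Am$1$2 = 0" and Am21: "Am$2$1 = 0"
    unfolding Am_def by simp_all
  have Amv: "Am *v v = vector [- s1 * v$1, - s2 * v$2]" for v
    by (simp add: vec_eq_iff forall_2 matrix_vector_mult_def sum_2 Am11 Am22 Am12 Am21)
  have re1: "Re s1 > 0"
  proof -
    have "is_eigenvalue Am (- s1)" unfolding is_eigenvalue_def
      by (rule exI[of _ "vector [1, 0]"]) (auto simp: Amv vec_eq_iff forall_2)
    then show ?thesis using stableGm unfolding hurwitz_def by fastforce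
  qed
  have re2: "Re s2 > 0"
  proof -
    have "is_eigenvalue Am (- s2)" unfolding is_eigenvalue_def
      by (rule exI[of _ "vector [0, 1]"]) (auto simp: Amv vec_eq_iff forall_2)
    then show ?thesis using stableGm unfolding hurwitz_def by fastforce
  qed
  have tfm: "tf Am Bm Cm s = b1/(s+s1) + b2/(s+s2)" if ns: "s + s1 \<noteq> 0" "s + s2 \<noteq> 0" for s
  proof -
    have Mv: "(mat s - Am) *v v = vector [(s + s1) * v$1, (s + s2) * v$2]" for v
      by (simp add: matrix_vector_mult_diff_rdistrib mat_mulv Amv vec_eq_iff forall_2 algebra_simps)
    have inv: "invertible (mat s - Am)"
      by (rule ker_invertible) (use ns in \<open>auto simp: Mv vec_eq_iff forall_2\<close>)
    have "(mat s - Am) *v vector [b1/(s+s1), b2/(s+s2)] = Bm"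
      using ns by (simp add: Mv Bm_def vec_eq_iff forall_2)
    then have "matrix_inv (mat s - Am) *v Bm = vector [b1/(s+s1), b2/(s+s2)]"
      by (rule inv_apply[OF inv])
    then show ?thesis unfolding tf_def by (simp add: sum_2 Cm_def)
  qed
  have nz1: "s1 \<noteq> 0" "s1 + s1 \<noteq> 0" using re1 by auto
  have nz2: "s2 \<noteq> 0" "s2 + s2 \<noteq> 0" using re2 by auto
  have nz12: "s1 + s2 \<noteq> 0" "s2 + s1 \<noteq> 0" using re1 re2 by (auto simp: complex_eq_iff)
  have d: "s2 - s1 \<noteq> 0" using distinct by simp
  have t1: "tf Am Bm Cm s1 = b1/(s1+s1) + b2/(s1+s2)" by (rule tfm) (use nz1 nz12 in auto)
  have t2: "tf Am Bm Cm s2 = b1/(s2+s1) + b2/(s2+s2)" by (rule tfm) (use nz2 nz12 in auto)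
  have G1: "g1 = b1/(2 * s1) + b2/(s1+s2)"
    using t1 interp1 g1_eq by (simp only: mult_2)
  have G2: "g2 = b1/(s1+s2) + b2/(2 * s2)"
    using t2 interp2 g2_eq by (simp only: mult_2 add.commute)
  have L: "(Am ** P + P ** hadj Am + (\<chi> i j. Bm$i * cnj (Bm$j)))$i$j = 0" for i j
    using lyap by simp
  have Pij: "P$i$j = Bm$i * cnj (Bm$j) / (- Am$i$i + cnj (- Am$j$j))" for i j
  proof -
    have nz: "- Am$i$i + cnj (- Am$j$j) \<noteq> 0"
    proof -
      have "Re (- Am$i$i) > 0" "Re (- Am$j$j) > 0"
        using re1 re2 exhaust_2[of i] exhaust_2[of j] by (auto simp: Am11 Am22)
      then show ?thesis by (auto simp: complex_eq_iff)
    qed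
    have "Am$i$i * P$i$j + P$i$j * cnj (Am$j$j) + Bm$i * cnj (Bm$j) = 0"
      using L[of i j] exhaust_2[of i] exhaust_2[of j]
      by (auto simp: matrix_matrix_mult_def sum_2 hadj_def Am11 Am22 Am12 Am21)
    then have h0: "Am$i$i * P$i$j + P$i$j * cnj (Am$j$j) = - (Bm$i * cnj (Bm$j))"
      by (simp add: eq_neg_iff_add_eq_0)
    have "P$i$j * (- Am$i$i + cnj (- Am$j$j)) = - (Am$i$i * P$i$j + P$i$j * cnj (Am$j$j))"
      by (simp add: algebra_simps)
    then have "P$i$j * (- Am$i$i + cnj (- Am$j$j)) = Bm$i * cnj (Bm$j)"
      using h0 by simp
    then show ?thesis using nz by (simp add: field_simps)
  qed
  have LHS: "(\<Sum>i\<in>UNIV. \<Sum>j\<in>UNIV. Cm$i * P$i$j * cnj (Cm$j)) =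
     b1 * cnj (b1/(cnj s1 + s1) + b2/(cnj s1 + s2)) + b2 * cnj (b1/(cnj s2 + s1) + b2/(cnj s2 + s2))"
    by (simp add: sum_2 Cm_def Pij Am11 Am22 Bm_def algebra_simps)
  have LHS2: "(\<Sum>i\<in>UNIV. \<Sum>j\<in>UNIV. Cm$i * P$i$j * cnj (Cm$j)) = b1 * g1 + b2 * g2"
    using real_or_conj
  proof -
    have e1: "b1/(s1+s1) + b2/(s1+s2) = g1" using G1 by (simp only: mult_2)
    have cm: "s2 + s1 = s1 + s2" by (rule add.commute)
    have e2: "b1/(s2+s1) + b2/(s2+s2) = g2" unfolding cm using G2 by (simp only: mult_2)
    show ?thesis using real_or_conj
  proof
    assume r: "Im s1 = 0 \<and> Im s2 = 0"
    then have c1: "cnj s1 = s1" and c2: "cnj s2 = s2" by (auto simp: complex_eq_iff)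
    have "M1 *v cnjv x1 = cB"
      using cnjv_sys[of s1 A x1] c1 hx1 unfolding M1_def cA_def cB_def by (simp add: cnjv_cvec)
    then have "matrix_inv M1 *v cB = cnjv x1" by (rule inv_apply[OF inv1])
    then have "cnjv x1 = x1" unfolding x1_def by simp
    then have rg1: "cnj g1 = g1" unfolding g1_def cC_def by (simp add: cnj_cdot)
    have "M2 *v cnjv x2 = cB"
      using cnjv_sys[of s2 A x2] c2 hx2 unfolding M2_def cA_def cB_def by (simp add: cnjv_cvec)
    then have "matrix_inv M2 *v cB = cnjv x2" by (rule inv_apply[OF inv2])
    then have "cnjv x2 = x2" unfolding x2_def by simp
    then have rg2: "cnj g2 = g2" unfolding g2_def cC_def by (simp add: cnj_cdot)
    show ?thesis unfolding LHS c1 c2 e1 e2 rg1 rg2 ..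
  next
    assume c: "s2 = cnj s1"
    then have c1: "cnj s1 = s2" and c2: "cnj s2 = s1" by auto
    have "M2 *v cnjv x1 = cB"
      using cnjv_sys[of s1 A x1] c1 hx1 unfolding M1_def M2_def cA_def cB_def by (simp add: cnjv_cvec)
    then have "matrix_inv M2 *v cB = cnjv x1" by (rule inv_apply[OF inv2])
    then have "cnjv x1 = x2" unfolding x2_def by simp
    then have cg: "cnj g1 = g2" unfolding g1_def g2_def cC_def by (simp add: cnj_cdot)
    then have cg2: "cnj g2 = g1" by auto
    show ?thesis unfolding LHS c1 c2 e1 e2 cg cg2 by (simp add: mult.commute)
  qed
  qed
  define K where "K = cmat (\<chi> i j. B$i * B$j)"
  define Minv where "Minv = matrix_inv (M1 ** M2)"
  have invN: "invertible (M1 ** M2)" by (rule invertible_mult[OF inv1 inv2])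
  define y where "y = cC v* Minv"
  have Ax1: "cA *v x1 = s1 *s x1 - cB"
    using hx1 unfolding M1_def by (intro swap_diff) (simp add: matrix_vector_mult_diff_rdistrib mat_mulv)
  have Ax2: "cA *v x2 = s2 *s x2 - cB"
    using hx2 unfolding M2_def by (intro swap_diff) (simp add: matrix_vector_mult_diff_rdistrib mat_mulv)
  have M2x1: "M2 *v x1 = (s2 - s1) *s x1 + cB"
    unfolding M2_def by (simp add: matrix_vector_mult_diff_rdistrib mat_mulv Ax1 vec_eq_iff algebra_simps)
  define z where "z = (1/(s2 - s1)) *s (x1 - x2)"
  define w where "w = (1/(s2 - s1)) *s (s1 *s x1 - s2 *s x2)"
  have Nz: "(M1 ** M2) *v z = cB"
  proof -
    have "M2 *v z = (1/(s2-s1)) *s (M2 *v x1 - M2 *v x2)"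
      unfolding z_def by (simp add: vector_scalar_commute matrix_vector_mult_diff_distrib)
    also have "\<dots> = x1" unfolding M2x1 hx2 using d by (rule scal_cancel)
    finally have "M2 *v z = x1" .
    then show ?thesis by (simp add: matrix_vector_mul_assoc[symmetric] hx1)
  qed
  have Nw: "(M1 ** M2) *v w = cA *v cB"
  proof -
    have M1B: "M1 *v cB = s1 *s cB - cA *v cB"
      unfolding M1_def by (simp add: matrix_vector_mult_diff_rdistrib mat_mulv)
    have "M2 *v (s1 *s x1 - s2 *s x2) = s1 *s (M2 *v x1) - s2 *s (M2 *v x2)"
      by (simp only: matrix_vector_mult_diff_distrib vector_scalar_commute)
    also have "\<dots> = s1 *s ((s2 - s1) *s x1 + cB) - s2 *s cB" by (simp only: M2x1 hx2)
    finally have e: "M2 *v (s1 *s x1 - s2 *s x2) = s1 *s ((s2 - s1) *s x1 + cB) - s2 *s cB" .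
    have "M1 *v (M2 *v (s1 *s x1 - s2 *s x2)) = s1 *s ((s2 - s1) *s (M1 *v x1) + M1 *v cB) - s2 *s (M1 *v cB)"
      unfolding e by (simp only: matrix_vector_mult_diff_distrib vector_scalar_commute matrix_vector_right_distrib)
    also have "\<dots> = s1 *s ((s2 - s1) *s cB + (s1 *s cB - cA *v cB)) - s2 *s (s1 *s cB - cA *v cB)"
      by (simp only: hx1 M1B)
    also have "\<dots> = (s2 - s1) *s (cA *v cB)"
      by (simp add: vec_eq_iff algebra_simps)
    finally have e2: "M1 *v (M2 *v (s1 *s x1 - s2 *s x2)) = (s2 - s1) *s (cA *v cB)" .
    have "(M1 ** M2) *v w = (1/(s2 - s1)) *s (M1 *v (M2 *v (s1 *s x1 - s2 *s x2)))"
      unfolding w_def by (simp only: matrix_vector_mul_assoc[symmetric] vector_scalar_commute)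
    also have "\<dots> = cA *v cB" unfolding e2 using d by (rule scal_cancel2)
    finally show ?thesis .
  qed
  have Mz: "Minv *v cB = z" unfolding Minv_def by (rule inv_apply[OF invN Nz])
  have Mw: "Minv *v (cA *v cB) = w" unfolding Minv_def by (rule inv_apply[OF invN Nw])
  have cz: "cdot cC z = (g1 - g2) / (s2 - s1)"
    unfolding z_def g1_def g2_def by (simp add: cdot_lin diff_divide_distrib)
  have cw: "cdot cC w = (s1 * g1 - s2 * g2) / (s2 - s1)"
    unfolding w_def g1_def g2_def by (simp add: cdot_lin diff_divide_distrib)
  have yB: "cdot y cB = cdot cC z" unfolding y_def by (simp add: cdot_mat[symmetric] Mz)
  have yAB: "cdot y (cA *v cB) = cdot cC w" unfolding y_def by (simp add: cdot_mat[symmetric] Mw)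
  have matv: "u v* mat k = k *s u" for u :: "complex^'n" and k
    by (metis transpose_mat transpose_matrix_vector mat_mulv)
  have yK: "y v* (mat (s1 * s2) ** K + cA ** K ** transpose cA)
      = (s1 * s2 * cdot y cB) *s cB + cdot y (cA *v cB) *s (cA *v cB)"
  proof -
    have "y v* (mat (s1 * s2) ** K) = (s1 * s2 * cdot y cB) *s cB"
      by (simp add: vector_matrix_mul_assoc[symmetric] matv scalar_vector_matrix_assoc K_def K_mul
          cB_def vector_smult_assoc cdot_lin cdot_scal_l)
    moreover have "y v* (cA ** K ** transpose cA) = cdot y (cA *v cB) *s (cA *v cB)"
      by (simp add: vector_matrix_mul_assoc[symmetric] K_def K_mul cB_def vector_scalar_commute
          cdot_mat[symmetric])
    ultimately show ?thesis by (simp add: vector_matrix_mult_add_rdistrib)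
  qed
  have RHS: "(\<Sum>i\<in>UNIV. (cvec C v*
        (matrix_inv ((mat s1 - cmat A) ** (mat s2 - cmat A))
         ** (mat (s1 * s2) ** cmat (\<chi> i j. B$i * B$j)
             + cmat A ** cmat (\<chi> i j. B$i * B$j) ** transpose (cmat A))
         ** transpose (matrix_inv ((mat s1 - cmat A) ** (mat s2 - cmat A))))) $ i
      * cvec C $ i) = s1 * s2 * (cdot cC z)^2 + (cdot cC w)^2"
  proof -
    have "(\<Sum>i\<in>UNIV. (cvec C v*
        (matrix_inv ((mat s1 - cmat A) ** (mat s2 - cmat A))
         ** (mat (s1 * s2) ** cmat (\<chi> i j. B$i * B$j)
             + cmat A ** cmat (\<chi> i j. B$i * B$j) ** transpose (cmat A))
         ** transpose (matrix_inv ((mat s1 - cmat A) ** (mat s2 - cmat A))))) $ i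
      * cvec C $ i) = cdot (cC v* (Minv ** (mat (s1 * s2) ** K + cA ** K ** transpose cA) ** transpose Minv)) cC"
      unfolding cdot_def Minv_def M1_def M2_def cA_def K_def cC_def ..
    also have "\<dots> = cdot (Minv *v (y v* (mat (s1 * s2) ** K + cA ** K ** transpose cA))) cC"
      by (simp add: vector_matrix_mul_assoc[symmetric] y_def)
    also have "\<dots> = cdot y (y v* (mat (s1 * s2) ** K + cA ** K ** transpose cA))"
      by (simp add: cdot_comm[of _ cC] cdot_mat y_def)
    also have "\<dots> = s1 * s2 * (cdot y cB)^2 + (cdot y (cA *v cB))^2"
      by (simp add: yK cdot_lin power2_eq_square)
    finally show ?thesis by (simp add: yB yAB)
  qed
  show ?thesis unfolding LHS2 RHS cz cw
    by (rule final_alg[OF nz1(1) nz2(1) nz12(1) d G1 G2])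
qed


end
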